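(* For every $k\in[n]$ and every signaling scheme $\mathcal{Z}'$ for $\mathcal{D}$, \[\int_0^{F_{\mathcal{D}}(v_k)} s_{\mathcal{Z}'}(x)\,dx\ \le\ V_k-\max_{i\in[k]}\Big\{v_i\sum_{j=i}^k f_{\mathcal{D}}(v_j)\Big\},\qquad\text{where } V_k=\sum_{i=1}^k v_i f_{\mathcal{D}}(v_i).\]
   Context: Values and prior. $0<v_1<\dots<v_n$ are reals, and $v_0:=0$. $\mathcal{D}$ is a distribution on $\{v_1,\dots,v_n\}$ with $f_{\mathcal{D}}(v_i)>0$ and CDF $F_{\mathcal{D}}$. Signals and pricing. A signal is a distribution $S$ on these values, with $G_S(p)=\Pr_{v\sim S}[v\ge p]$. The seller posts $p^*_S$, the smallest $v$ in the support of $S$ maximizing $v\,G_S(v)$. The surplus of value $v$ is $cs_v(S)=\mathbb{1}[v\ge p^*_S](v-p^*_S)$. Signaling schemes. A signaling scheme is $\mathcal{Z}=\{(S_q,\gamma_q)\}_{q\in[Q]}$ with $\gamma_q\ge0$, $\sum\gamma_q=1$ and $\sum_q\gamma_q f_{S_q}=f_{\mathcal{D}}$. Its expected consumer surplus at $v_i$ is $cs_{v_i}(\mathcal{Z})=\sum_q cs_{v_i}(S_q)\gamma_q f_{S_q}(v_i)/f_{\mathcal{D}}(v_i)$. The surplus-mass function $s_{\mathcal{Z}}$ on $(0,1]$ equals $cs_{v_i}(\mathcal{Z})$ on $(F_{\mathcal{D}}(v_{i-1}),F_{\mathcal{D}}(v_i)]$. In particular, $\int_0^{F_{\mathcal{D}}(v_k)}s_{\mathcal{Z}}=\sum_{i\le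 k}f_{\mathcal{D}}(v_i)\,cs_{v_i}(\mathcal{Z})$. *)

theory Defs
  imports "HOL-Analysis.Analysis"
begin

text \<open>Values are v 1 < ... < v n (indices 1..n), v 0 = 0 is not used.
  Distributions on the values are represented by their mass functions on indices 1..n.\<close>

definition distr_on :: "nat \<Rightarrow> (nat \<Rightarrow> real) \<Rightarrow> bool" where
  "distr_on n g \<longleftrightarrow> (\<forall>i\<in>{1..n}. g i \<ge> 0) \<and> (\<Sum>i=1..n. g i) = 1"

definition Gs :: "nat \<Rightarrow> (nat \<Rightarrow> real) \<Rightarrow> (nat \<Rightarrow> real) \<Rightarrow> real \<Rightarrow> real" where
  "Gs n v g p = (\<Sum>j\<in>{1..n}. if v j \<ge> p then g j else 0)"

definition supp_vals :: "nat \<Rightarrow> (nat \<Rightarrow> real) \<Rightarrow> (nat \<Rightarrow> real) \<Rightarrow> real set" where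
  "supp_vals n v g = v ` {i\<in>{1..n}. g i > 0}"

definition price :: "nat \<Rightarrow> (nat \<Rightarrow> real) \<Rightarrow> (nat \<Rightarrow> real) \<Rightarrow> real" where
  "price n v g = (LEAST p. p \<in> supp_vals n v g \<and>
      (\<forall>q\<in>supp_vals n v g. q * Gs n v g q \<le> p * Gs n v g p))"

definition cs :: "nat \<Rightarrow> (nat \<Rightarrow> real) \<Rightarrow> (nat \<Rightarrow> real) \<Rightarrow> real \<Rightarrow> real" where
  "cs n v g x = (if x \<ge> price n v g then x - price n v g else 0)"

text \<open>A signaling scheme with Q signals: signal q has mass function S q and weight \<gamma> q.\<close>
definition is_scheme :: "nat \<Rightarrow> (nat \<Rightarrow> real) \<Rightarrow> nat \<Rightarrow> (nat \<Rightarrow> nat \<Rightarrow> real) \<Rightarrow> (nat \<Rightarrow> real) \<Rightarrow> bool" where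
  "is_scheme n f Q S \<gamma> \<longleftrightarrow> (\<forall>q<Q. distr_on n (S q) \<and> \<gamma> q \<ge> 0) \<and> (\<Sum>q<Q. \<gamma> q) = 1 \<and>
     (\<forall>i\<in>{1..n}. (\<Sum>q<Q. \<gamma> q * S q i) = f i)"

definition cs_scheme :: "nat \<Rightarrow> (nat \<Rightarrow> real) \<Rightarrow> (nat \<Rightarrow> real) \<Rightarrow> nat \<Rightarrow> (nat \<Rightarrow> nat \<Rightarrow> real) \<Rightarrow> (nat \<Rightarrow> real) \<Rightarrow> nat \<Rightarrow> real" where
  "cs_scheme n v f Q S \<gamma> i = (\<Sum>q<Q. cs n v (S q) (v i) * \<gamma> q * S q i / f i)"

definition cdf :: "(nat \<Rightarrow> real) \<Rightarrow> nat \<Rightarrow> real" where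
  "cdf f i = (\<Sum>j=1..i. f j)"

text \<open>surplus-mass function on (0,1]: equals cs_{v_i}(Z) on (F(v_{i-1}), F(v_i)] (0 elsewhere)\<close>
definition smass :: "nat \<Rightarrow> (nat \<Rightarrow> real) \<Rightarrow> (nat \<Rightarrow> real) \<Rightarrow> nat \<Rightarrow> (nat \<Rightarrow> nat \<Rightarrow> real) \<Rightarrow> (nat \<Rightarrow> real) \<Rightarrow> real \<Rightarrow> real" where
  "smass n v f Q S \<gamma> x = (\<Sum>i=1..n. if cdf f (i - 1) < x \<and> x \<le> cdf f i then cs_scheme n v f Q S \<gamma> i else 0)"

end

theory Submission
  imports Defs
begin


lemma step_int:
  fixes a b c d :: real
  assumes "0 \<le> a" "a \<le> b" "b \<le> c"
  shows "((\<lambda>x. if a < x \<and> x \<le> b then d else 0) has_integral (b - a) * d) {0..c}"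
proof -
  have "((\<lambda>x. d) has_integral (b - a) * d) ({a..b} \<inter> {0..c})"
  proof -
    have "{a..b} \<inter> {0..c} = {a..b}" using assms by auto
    moreover note has_integral_const_real[of d a b]
    ultimately show ?thesis using assms by simp
  qed
  then have "((\<lambda>x. if x \<in> {a..b} then d else 0) has_integral (b - a) * d) {0..c}"
    by (subst has_integral_restrict_Int)
  then show ?thesis
    by (rule has_integral_spike[OF negligible_sing[of a], rotated]) auto
qed

lemma price_props:
  fixes v g :: "nat \<Rightarrow> real"
  assumes vpos: "0 < v 1" and vmono: "strict_mono_on {1..n} v" and g: "distr_on n g"
  shows "price n v g \<in> supp_vals n v g"
    "\<forall>q\<in>supp_vals n v g. q * Gs n v g q \<le> price n v g * Gs n v g (price n v g)"
    "price n v g > 0"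
proof -
  let ?A = "supp_vals n v g"
  let ?h = "\<lambda>q. q * Gs n v g q"
  let ?P = "\<lambda>p. p \<in> ?A \<and> (\<forall>q\<in>?A. ?h q \<le> ?h p)"
  have fin: "finite ?A" unfolding supp_vals_def by auto
  have ne: "?A \<noteq> {}"
  proof
    assume "?A = {}"
    have "\<forall>i\<in>{1..n}. g i \<le> 0" proof (intro ballI)
      fix i assume "i \<in> {1..n}"
      show "g i \<le> 0"
      proof (rule ccontr)
        assume "\<not> g i \<le> 0"
        then have "i \<in> {i\<in>{1..n}. g i > 0}" using \<open>i \<in> {1..n}\<close> by simp
        then have "v i \<in> ?A" unfolding supp_vals_def by (rule imageI)
        then show False using \<open>?A = {}\<close> by (metis empty_iff)
      qed
    qed
    then have "(\<Sum>i=1..n. g i) \<le> 0" by (meson sum_nonpos)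
    then show False using g unfolding distr_on_def by simp
  qed
  have "Max (?h ` ?A) \<in> ?h ` ?A" by (rule Max_in) (use fin ne in simp_all)
  then obtain p0 where p0: "p0 \<in> ?A" "?h p0 = Max (?h ` ?A)" by (rule imageE) (rule that, assumption, rule sym)
  have Pp0: "?P p0"
  proof (intro conjI ballI)
    fix q assume "q \<in> ?A"
    then have "?h q \<le> Max (?h ` ?A)" using fin by simp
    then show "?h q \<le> ?h p0" using p0(2) by simp
  qed (rule p0(1))
  let ?B = "{p. ?P p}"
  have finB: "finite ?B" by (rule finite_subset[OF _ fin]) auto
  have neB: "?B \<noteq> {}" using Pp0 by auto
  have MB: "Min ?B \<in> ?B" using Min_in[OF finB neB] .
  have "price n v g = Min ?B"
    unfolding price_def
  proof (rule Least_equality)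
    show "?P (Min ?B)" using MB by blast
    fix y assume "?P y"
    then have "y \<in> ?B" by blast
    then show "Min ?B \<le> y" using finB by (rule Min_le[rotated])
  qed
  then have Pp: "?P (price n v g)" using MB by simp
  then show "price n v g \<in> ?A" "\<forall>q\<in>?A. ?h q \<le> price n v g * Gs n v g (price n v g)" by auto
  from Pp obtain i where i: "i \<in> {1..n}" "price n v g = v i" unfolding supp_vals_def by auto
  have "v 1 \<le> v i" using i by (intro strict_mono_on_leD[OF vmono]) auto
  then show "price n v g > 0" using i vpos by simp
qed


lemma vle_iff:
  fixes v :: "nat \<Rightarrow> real"
  assumes vmono: "strict_mono_on {1..n} v" and "i \<in> {1..n}" "j \<in> {1..n}"
  shows "v i \<le> v j \<longleftrightarrow> i \<le> j"
proof
  assume "v i \<le> v j"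
  show "i \<le> j"
  proof (rule ccontr)
    assume "\<not> i \<le> j"
    then have "j < i" by simp
    then have "v j < v i" using assms by (intro strict_mono_onD[OF vmono]) auto
    then show False using \<open>v i \<le> v j\<close> by simp
  qed
next
  assume "i \<le> j" then show "v i \<le> v j" using assms by (intro strict_mono_on_leD[OF vmono]) auto
qed

lemma Gs_v:
  fixes v :: "nat \<Rightarrow> real"
  assumes vmono: "strict_mono_on {1..n} v" and i: "i \<in> {1..n}"
  shows "Gs n v g (v i) = (\<Sum>j=i..n. g j)"
proof -
  have "Gs n v g (v i) = (\<Sum>j\<in>{1..n}. if j \<in> {i..n} then g j else 0)"
    unfolding Gs_def
  proof (rule sum.cong[OF refl])
    fix j assume j: "j \<in> {1..n}"
    then have "v i \<le> v j \<longleftrightarrow> i \<le> j" using vle_iff[OF vmono i j] by simp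
    then show "(if v i \<le> v j then g j else 0) = (if j \<in> {i..n} then g j else 0)" using j by auto
  qed
  also have "\<dots> = sum g ({1..n} \<inter> {i..n})" by (rule sum.inter_restrict[symmetric]) simp
  also have "{1..n} \<inter> {i..n} = {i..n}" using i by auto
  finally show ?thesis .
qed

lemma per_q:
  fixes v g :: "nat \<Rightarrow> real"
  assumes vpos: "0 < v 1" and vmono: "strict_mono_on {1..n} v" and g: "distr_on n g"
    and a: "1 \<le> a" "a \<le> k" "k \<le> n"
  shows "(\<Sum>i=1..k. g i * cs n v g (v i)) + v a * (\<Sum>j=a..k. g j) \<le> (\<Sum>i=1..k. v i * g i)"
proof -
  define p where "p = price n v g"
  have pA: "p \<in> supp_vals n v g" and popt: "\<forall>q\<in>supp_vals n v g. q * Gs n v g q \<le> p * Gs n v g p"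
    and ppos: "p > 0" using price_props[OF vpos vmono g] unfolding p_def by auto
  have gnn: "\<And>i. i \<in> {1..n} \<Longrightarrow> g i \<ge> 0" using g unfolding distr_on_def by auto
  have vposi: "\<And>i. i \<in> {1..n} \<Longrightarrow> v i > 0"
  proof -
    fix i assume "i \<in> {1..n}"
    then have "v 1 \<le> v i" by (intro strict_mono_on_leD[OF vmono]) auto
    then show "v i > 0" using vpos by simp
  qed
  have key: "(\<Sum>i=1..k. v i * g i) - (\<Sum>i=1..k. g i * cs n v g (v i)) = (\<Sum>i=1..k. g i * min (v i) p)"
    unfolding sum_subtractf[symmetric]
    by (rule sum.cong[OF refl]) (auto simp: cs_def p_def[symmetric] min_def algebra_simps)
  have main: "v a * (\<Sum>j=a..k. g j) \<le> (\<Sum>i=1..k. g i * min (v i) p)"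
  proof (cases "v a \<le> p")
    case True
    have "v a * (\<Sum>j=a..k. g j) = (\<Sum>j=a..k. g j * v a)" by (simp add: sum_distrib_left algebra_simps)
    also have "\<dots> \<le> (\<Sum>j=a..k. g j * min (v j) p)"
    proof (rule sum_mono)
      fix j assume j: "j \<in> {a..k}"
      have "v a \<le> v j" using j a by (intro strict_mono_on_leD[OF vmono]) auto
      then have "v a \<le> min (v j) p" using True by simp
      then show "g j * v a \<le> g j * min (v j) p" using gnn[of j] j a by (intro mult_left_mono) auto
    qed
    also have "\<dots> \<le> (\<Sum>i=1..k. g i * min (v i) p)"
    proof (rule sum_mono2)
      show "{a..k} \<subseteq> {1..k}" using a by auto
      fix i assume "i \<in> {1..k} - {a..k}"
      then have "i \<in> {1..n}" using a by auto
      then show "0 \<le> g i * min (v i) p" using gnn[of i] vposi[of i] ppos by (intro mult_nonneg_nonneg) auto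
    qed simp
    finally show ?thesis .
  next
    case False
    then have pa: "p < v a" by simp
    define T where "T = (\<Sum>j=k+1..n. g j)"
    have T0: "T \<ge> 0" unfolding T_def using gnn a by (intro sum_nonneg) auto
    have U: "{1..n} = {1..k} \<union> {k+1..n}" using a by auto
    have h1: "(\<Sum>i=1..n. g i * min (v i) p) = (\<Sum>i=1..k. g i * min (v i) p) + T * p"
    proof -
      have "(\<Sum>i=1..n. g i * min (v i) p) = (\<Sum>i=1..k. g i * min (v i) p) + (\<Sum>i=k+1..n. g i * min (v i) p)"
        unfolding U by (rule sum.union_disjoint) auto
      also have "(\<Sum>i=k+1..n. g i * min (v i) p) = (\<Sum>i=k+1..n. g i * p)"
      proof (rule sum.cong[OF refl])
        fix i assume i: "i \<in> {k+1..n}"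
        have "v a \<le> v i" using i a by (intro strict_mono_on_leD[OF vmono]) auto
        then show "g i * min (v i) p = g i * p" using pa by simp
      qed
      also have "\<dots> = T * p" unfolding T_def by (simp add: sum_distrib_right)
      finally show ?thesis .
    qed
    have h2: "p * Gs n v g p \<le> (\<Sum>i=1..n. g i * min (v i) p)"
    proof -
      have "p * Gs n v g p = (\<Sum>j=1..n. if p \<le> v j then g j * p else 0)"
        unfolding Gs_def sum_distrib_left by (rule sum.cong[OF refl]) auto
      also have "\<dots> \<le> (\<Sum>i=1..n. g i * min (v i) p)"
      proof (rule sum_mono)
        fix j assume j: "j \<in> {1..n}"
        show "(if p \<le> v j then g j * p else 0) \<le> g j * min (v j) p"
          using gnn[OF j] vposi[OF j] ppos by (auto simp: min_def)
      qed
      finally show ?thesis .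
    qed
    have Gsnn: "Gs n v g q \<ge> 0" for q unfolding Gs_def using gnn by (intro sum_nonneg) auto
    have h3: "v a * (\<Sum>j=a..n. g j) \<le> p * Gs n v g p"
    proof (cases "\<exists>j\<in>{a..n}. g j > 0")
      case False
      then have "(\<Sum>j=a..n. g j) = 0" using gnn a by (intro sum.neutral) (auto simp: not_less intro: order.antisym)
      then show ?thesis using Gsnn[of p] ppos by simp
    next
      case True
      define M where "M = {j\<in>{a..n}. g j > 0}"
      have finM: "finite M" unfolding M_def by simp
      have neM: "M \<noteq> {}" using True unfolding M_def by auto
      define m where "m = Min M"
      have mM: "m \<in> M" unfolding m_def using Min_in[OF finM neM] .
      then have m: "a \<le> m" "m \<le> n" "g m > 0" unfolding M_def by auto
      have vmA: "v m \<in> supp_vals n v g" unfolding supp_vals_def using m a by auto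
      have "(\<Sum>j=a..n. g j) = (\<Sum>j\<in>{a..<m}. g j) + (\<Sum>j=m..n. g j)"
      proof -
        have "{a..n} = {a..<m} \<union> {m..n}" using m by auto
        moreover have "sum g ({a..<m} \<union> {m..n}) = sum g {a..<m} + sum g {m..n}"
          by (rule sum.union_disjoint) auto
        ultimately show ?thesis by simp
      qed
      also have "(\<Sum>j\<in>{a..<m}. g j) = 0"
      proof (rule sum.neutral, rule ballI)
        fix j assume j: "j \<in> {a..<m}"
        have "j \<notin> M"
        proof
          assume "j \<in> M" then have "m \<le> j" unfolding m_def using finM by simp
          then show False using j by simp
        qed
        then have "\<not> g j > 0" using j m unfolding M_def by auto
        moreover have "g j \<ge> 0" using j m a by (intro gnn) auto
        ultimately show "g j = 0" by simp
      qed
      finally have eq: "(\<Sum>j=a..n. g j) = Gs n v g (v m)" using Gs_v[OF vmono, of m g] m a by simp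
      have "v a \<le> v m" using m a by (intro strict_mono_on_leD[OF vmono]) auto
      then have "v a * (\<Sum>j=a..n. g j) \<le> v m * Gs n v g (v m)" unfolding eq
        using Gsnn by (intro mult_right_mono) auto
      also have "\<dots> \<le> p * Gs n v g p" using popt vmA by blast
      finally show ?thesis .
    qed
    have h4: "(\<Sum>j=a..n. g j) = (\<Sum>j=a..k. g j) + T"
    proof -
      have "{a..n} = {a..k} \<union> {k+1..n}" using a by auto
      moreover have "sum g ({a..k} \<union> {k+1..n}) = sum g {a..k} + sum g {k+1..n}"
        by (rule sum.union_disjoint) auto
      ultimately show ?thesis unfolding T_def by simp
    qed
    have "p * T \<le> v a * T" using pa T0 by (intro mult_right_mono) auto
    then show ?thesis using h1 h2 h3 h4 by (simp add: algebra_simps)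
  qed
  show ?thesis using key main by simp
qed


theorem lemma3:
  fixes n k Q :: nat and v f :: "nat \<Rightarrow> real" and S :: "nat \<Rightarrow> nat \<Rightarrow> real" and \<gamma> :: "nat \<Rightarrow> real"
  assumes vpos: "0 < v 1"
    and vmono: "strict_mono_on {1..n} v"
    and fpos: "\<forall>i\<in>{1..n}. f i > 0"
    and fsum: "(\<Sum>i=1..n. f i) = 1"
    and scheme: "is_scheme n f Q S \<gamma>"
    and k: "k \<in> {1..n}"
  shows "integral {0..cdf f k} (smass n v f Q S \<gamma>)
     \<le> (\<Sum>i=1..k. v i * f i) - Max ((\<lambda>i. v i * (\<Sum>j=i..k. f j)) ` {1..k})"
proof -
  define c where "c = cs_scheme n v f Q S \<gamma>"
  have Sd: "\<And>q. q < Q \<Longrightarrow> distr_on n (S q)" and gnn: "\<And>q. q < Q \<Longrightarrow> \<gamma> q \<ge> 0"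
    and fS: "\<And>i. i \<in> {1..n} \<Longrightarrow> (\<Sum>q<Q. \<gamma> q * S q i) = f i"
    using scheme unfolding is_scheme_def by auto
  have cdf_Suc: "cdf f i = cdf f (i - 1) + f i" if "1 \<le> i" for i
  proof -
    have "Suc 0 \<le> i" using that by simp
    then obtain m where "i = Suc m" using Suc_le_D by blast
    then show ?thesis unfolding cdf_def by simp
  qed
  have cdf_mono: "cdf f i \<le> cdf f j" if "i \<le> j" "j \<le> n" for i j
  proof -
    have "cdf f j = cdf f i + (\<Sum>l=i+1..j. f l)"
    proof -
      have "{1..j} = {1..i} \<union> {i+1..j}" using that by auto
      moreover have "sum f ({1..i} \<union> {i+1..j}) = sum f {1..i} + sum f {i+1..j}"
        by (rule sum.union_disjoint) auto
      ultimately show ?thesis unfolding cdf_def by simp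
    qed
    moreover have "(\<Sum>l=i+1..j. f l) \<ge> 0" using fpos that by (intro sum_nonneg) (auto intro: less_imp_le)
    ultimately show ?thesis by simp
  qed
  have cdf0: "cdf f 0 = 0" unfolding cdf_def by simp
  have kk: "1 \<le> k" "k \<le> n" using k by auto
  have eqs: "smass n v f Q S \<gamma> x = (\<Sum>i=1..k. if cdf f (i - 1) < x \<and> x \<le> cdf f i then c i else 0)"
    if x: "x \<in> {0..cdf f k}" for x
  proof -
    have "{1..n} = {1..k} \<union> {k+1..n}" using kk by auto
    then have "smass n v f Q S \<gamma> x = (\<Sum>i=1..k. if cdf f (i - 1) < x \<and> x \<le> cdf f i then c i else 0)
       + (\<Sum>i=k+1..n. if cdf f (i - 1) < x \<and> x \<le> cdf f i then c i else 0)"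
      unfolding smass_def c_def by (simp add: sum.union_disjoint)
    also have "(\<Sum>i=k+1..n. if cdf f (i - 1) < x \<and> x \<le> cdf f i then c i else 0) = 0"
    proof (rule sum.neutral, rule ballI)
      fix i assume i: "i \<in> {k+1..n}"
      have "cdf f k \<le> cdf f (i - 1)" using i by (intro cdf_mono) auto
      then show "(if cdf f (i - 1) < x \<and> x \<le> cdf f i then c i else 0) = 0" using x by auto
    qed
    finally show ?thesis by simp
  qed
  have hint: "((\<lambda>x. \<Sum>i=1..k. if cdf f (i - 1) < x \<and> x \<le> cdf f i then c i else 0)
      has_integral (\<Sum>i=1..k. (cdf f i - cdf f (i - 1)) * c i)) {0..cdf f k}"
  proof (rule has_integral_sum)
    fix i assume i: "i \<in> {1..k}"
    show "((\<lambda>x. if cdf f (i - 1) < x \<and> x \<le> cdf f i then c i else 0) has_integral (cdf f i - cdf f (i - 1)) * c i) {0..cdf f k}"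
    proof (rule step_int)
      show "0 \<le> cdf f (i - 1)" using cdf_mono[of 0 "i - 1"] cdf0 i kk by auto
      show "cdf f (i - 1) \<le> cdf f i" using cdf_mono[of "i - 1" i] i kk by auto
      show "cdf f i \<le> cdf f k" using cdf_mono[of i k] i kk by auto
    qed
  qed simp
  have I: "integral {0..cdf f k} (smass n v f Q S \<gamma>) = (\<Sum>i=1..k. f i * c i)"
  proof -
    have "integral {0..cdf f k} (smass n v f Q S \<gamma>) = integral {0..cdf f k} (\<lambda>x. \<Sum>i=1..k. if cdf f (i - 1) < x \<and> x \<le> cdf f i then c i else 0)"
      by (rule integral_cong) (rule eqs)
    also have "\<dots> = (\<Sum>i=1..k. (cdf f i - cdf f (i - 1)) * c i)" using hint by (rule integral_unique)
    also have "\<dots> = (\<Sum>i=1..k. f i * c i)"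
      by (rule sum.cong[OF refl]) (simp add: cdf_Suc)
    finally show ?thesis .
  qed
  have fc: "f i * c i = (\<Sum>q<Q. \<gamma> q * (S q i * cs n v (S q) (v i)))" if i: "i \<in> {1..n}" for i
  proof -
    have "f i > 0" using fpos i by blast
    then have "f i \<noteq> 0" by simp
    then show ?thesis unfolding c_def cs_scheme_def sum_distrib_left
      by (intro sum.cong[OF refl]) (simp add: field_simps)
  qed
  have bound: "(\<Sum>i=1..k. f i * c i) + v a * (\<Sum>j=a..k. f j) \<le> (\<Sum>i=1..k. v i * f i)"
    if a: "a \<in> {1..k}" for a
  proof -
    have e1: "(\<Sum>i=1..k. f i * c i) = (\<Sum>q<Q. \<gamma> q * (\<Sum>i=1..k. S q i * cs n v (S q) (v i)))"
    proof -
      have "(\<Sum>i=1..k. f i * c i) = (\<Sum>i=1..k. \<Sum>q<Q. \<gamma> q * (S q i * cs n v (S q) (v i)))"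
        using kk by (intro sum.cong[OF refl] fc) auto
      also have "\<dots> = (\<Sum>q<Q. \<gamma> q * (\<Sum>i=1..k. S q i * cs n v (S q) (v i)))"
        by (subst sum.swap) (simp add: sum_distrib_left)
      finally show ?thesis .
    qed
    have e2: "v a * (\<Sum>j=a..k. f j) = (\<Sum>q<Q. \<gamma> q * (v a * (\<Sum>j=a..k. S q j)))"
    proof -
      have "(\<Sum>j=a..k. f j) = (\<Sum>j=a..k. \<Sum>q<Q. \<gamma> q * S q j)"
        using kk a by (intro sum.cong[OF refl] fS[symmetric]) auto
      also have "\<dots> = (\<Sum>q<Q. \<gamma> q * (\<Sum>j=a..k. S q j))"
        by (subst sum.swap) (simp add: sum_distrib_left)
      finally show ?thesis by (simp add: sum_distrib_left algebra_simps)
    qed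
    have e3: "(\<Sum>i=1..k. v i * f i) = (\<Sum>q<Q. \<gamma> q * (\<Sum>i=1..k. v i * S q i))"
    proof -
      have "(\<Sum>i=1..k. v i * f i) = (\<Sum>i=1..k. \<Sum>q<Q. v i * (\<gamma> q * S q i))"
        using kk by (intro sum.cong[OF refl]) (auto simp: fS[symmetric] sum_distrib_left)
      also have "\<dots> = (\<Sum>q<Q. \<gamma> q * (\<Sum>i=1..k. v i * S q i))"
        by (subst sum.swap) (simp add: sum_distrib_left algebra_simps)
      finally show ?thesis .
    qed
    have "(\<Sum>q<Q. \<gamma> q * (\<Sum>i=1..k. S q i * cs n v (S q) (v i))) + (\<Sum>q<Q. \<gamma> q * (v a * (\<Sum>j=a..k. S q j)))
        = (\<Sum>q<Q. \<gamma> q * ((\<Sum>i=1..k. S q i * cs n v (S q) (v i)) + v a * (\<Sum>j=a..k. S q j)))"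
      by (simp add: sum.distrib algebra_simps)
    also have "\<dots> \<le> (\<Sum>q<Q. \<gamma> q * (\<Sum>i=1..k. v i * S q i))"
    proof (rule sum_mono)
      fix q assume q: "q \<in> {..<Q}"
      have "(\<Sum>i=1..k. S q i * cs n v (S q) (v i)) + v a * (\<Sum>j=a..k. S q j) \<le> (\<Sum>i=1..k. v i * S q i)"
        using a kk by (intro per_q[OF vpos vmono Sd]) (use q in auto)
      then show "\<gamma> q * ((\<Sum>i=1..k. S q i * cs n v (S q) (v i)) + v a * (\<Sum>j=a..k. S q j))
          \<le> \<gamma> q * (\<Sum>i=1..k. v i * S q i)" using gnn q by (intro mult_left_mono) auto
    qed
    finally show ?thesis using e1 e2 e3 by simp
  qed
  have "Max ((\<lambda>i. v i * (\<Sum>j=i..k. f j)) ` {1..k}) \<le> (\<Sum>i=1..k. v i * f i) - (\<Sum>i=1..k. f i * c i)"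
  proof (rule Max.boundedI)
    show "(\<lambda>i. v i * (\<Sum>j=i..k. f j)) ` {1..k} \<noteq> {}" using kk by auto
    fix y assume "y \<in> (\<lambda>i. v i * (\<Sum>j=i..k. f j)) ` {1..k}"
    then obtain a where "a \<in> {1..k}" "y = v a * (\<Sum>j=a..k. f j)" by auto
    then show "y \<le> (\<Sum>i=1..k. v i * f i) - (\<Sum>i=1..k. f i * c i)" using bound by force
  qed simp
  then show ?thesis unfolding I by simp
qed

end
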